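(* Let $n\ge2$, $\omega\in(0,1)$, and let $B_1,\dots,B_n$ be independent lognormal service times with $m_i=\mathbb E\ln B_i$, $s_i^2=\mathrm{Var}\ln B_i$, $m_1\le\cdots\le m_n$, $s_1^2\le\cdots\le s_n^2$; let $\mu_i=\mathbb EB_i$. Let $\alpha=\frac1{\sqrt{2\omega}}\sqrt{\exp(s_{n-1}^2)-1}$. Then $$C(\mathrm{Id},(1+\alpha)\boldsymbol\mu,\omega)\le2\omega\alpha\sum_{i=1}^{n-1}\exp(m_i+s_i^2/2),$$ where $(1+\alpha)\boldsymbol\mu$ is the schedule with $x_i=(1+\alpha)\mu_i$.
   Context: Appointment model: a sequence is a permutation $\tau\in\mathsf S_n$, $\tau(i)$ the patient in slot $i$; a schedule is $\boldsymbol x=(x_1,\dots,x_n)$, $x_j$ the interarrival time between patient $j$ and the next patient. Waiting and idle times: $W_1=I_1=0$, $W_{i+1}=(W_i+B_{\tau(i)}-x_{\tau(i)})^+$, $I_{i+1}=(W_i+B_{\tau(i)}-x_{\tau(i)})^-$, $a^+=\max\{0,a\}$, $a^-=\max\{0,-a\}$. Cost $C(\tau,\boldsymbol x,\omega)=\omega\sum_{i=1}^n\mathbb EI_i+(1-\omega)\sum_{i=1}^n\mathbb EW_i$. $\mathrm{Id}$ is the identity permutation. *)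

theory Defs
  imports "HOL-Probability.Probability"
begin

text \<open>Waiting time W_i (index i >= 1; value at index 0 is junk 0) for sequence tau,
 schedule x (x j = interarrival time after patient j) and realized service times b.\<close>
fun appt_wait :: "(nat \<Rightarrow> nat) \<Rightarrow> (nat \<Rightarrow> real) \<Rightarrow> (nat \<Rightarrow> real) \<Rightarrow> nat \<Rightarrow> real" where
  "appt_wait \<tau> x b 0 = 0"
| "appt_wait \<tau> x b (Suc i) =
     (if i = 0 then 0 else max 0 (appt_wait \<tau> x b i + b (\<tau> i) - x (\<tau> i)))"

fun appt_idle :: "(nat \<Rightarrow> nat) \<Rightarrow> (nat \<Rightarrow> real) \<Rightarrow> (nat \<Rightarrow> real) \<Rightarrow> nat \<Rightarrow> real" where
  "appt_idle \<tau> x b 0 = 0"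
| "appt_idle \<tau> x b (Suc i) =
     (if i = 0 then 0 else max 0 (- (appt_wait \<tau> x b i + b (\<tau> i) - x (\<tau> i))))"

definition appt_cost ::
  "'a measure \<Rightarrow> nat \<Rightarrow> (nat \<Rightarrow> 'a \<Rightarrow> real) \<Rightarrow> (nat \<Rightarrow> nat) \<Rightarrow> (nat \<Rightarrow> real) \<Rightarrow> real \<Rightarrow> real" where
  "appt_cost M n B \<tau> x \<omega> =
     \<omega> * (\<Sum>i=1..n. integral\<^sup>L M (\<lambda>y. appt_idle \<tau> x (\<lambda>j. B j y) i))
   + (1 - \<omega>) * (\<Sum>i=1..n. integral\<^sup>L M (\<lambda>y. appt_wait \<tau> x (\<lambda>j. B j y) i))"

definition lognormal_rv :: "'a measure \<Rightarrow> ('a \<Rightarrow> real) \<Rightarrow> real \<Rightarrow> real \<Rightarrow> bool" where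
  "lognormal_rv M X \<mu> \<sigma> \<longleftrightarrow>
     0 < \<sigma> \<and> X \<in> borel_measurable M \<and> (\<forall>y\<in>space M. 0 < X y) \<and>
     distributed M lborel (\<lambda>y. ln (X y)) (normal_density \<mu> \<sigma>)"

end

theory Submission
  imports Defs
begin


lemma normal_exp_shift:
  assumes "s > 0"
  shows "normal_density m s x * exp (k * x) = exp (k * m + k^2 * s^2 / 2) * normal_density (m + k * s^2) s x"
proof -
  have "exp (-(x - m)\<^sup>2 / (2 * s\<^sup>2)) * exp (k * x) = exp (k * m + k^2 * s^2 / 2) * exp (-(x - (m + k * s^2))\<^sup>2 / (2 * s\<^sup>2))"
    unfolding exp_add[symmetric] using assms by (simp add: field_simps power2_eq_square)
  then show ?thesis unfolding normal_density_def by (simp add: algebra_simps)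
qed

lemma lognormal_moment:
  assumes P: "prob_space M" and L: "lognormal_rv M X m s"
  shows "integrable M (\<lambda>y. exp (k * ln (X y)))"
    and "integral\<^sup>L M (\<lambda>y. exp (k * ln (X y))) = exp (k * m + k^2 * s^2 / 2)"
proof -
  have s: "s > 0" and D: "distributed M lborel (\<lambda>y. ln (X y)) (normal_density m s)"
    using L unfolding lognormal_rv_def by auto
  have eq: "(\<lambda>x. normal_density m s x * exp (k * x)) = (\<lambda>x. exp (k * m + k^2 * s^2 / 2) * normal_density (m + k * s^2) s x)"
    using normal_exp_shift[OF s] by auto
  have "integrable lborel (\<lambda>x. normal_density m s x * exp (k * x))"
    unfolding eq using s by simp
  then show "integrable M (\<lambda>y. exp (k * ln (X y)))"
    using distributed_integrable[OF D, of "\<lambda>x. exp (k * x)"] by simp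
  have "integral\<^sup>L M (\<lambda>y. exp (k * ln (X y))) = (\<integral>x. normal_density m s x * exp (k * x) \<partial>lborel)"
    using distributed_integral[OF D, of "\<lambda>x. exp (k * x)"] by simp
  also have "\<dots> = exp (k * m + k^2 * s^2 / 2)" unfolding eq using s by simp
  finally show "integral\<^sup>L M (\<lambda>y. exp (k * ln (X y))) = exp (k * m + k^2 * s^2 / 2)" .
qed

lemma exp_ln_1: "0 < (b::real) \<Longrightarrow> exp (1 * ln b) = b" by simp
lemma exp_ln_2: assumes "0 < (b::real)" shows "exp (2 * ln b) = b\<^sup>2"
proof -
  have "exp (2 * ln b) = exp (ln b) ^ 2" using exp_of_nat_mult[of 2 "ln b"] by simp
  then show ?thesis using assms by simp
qed

lemma sq_sum_le: "((a::real) + b)\<^sup>2 \<le> 2 * a\<^sup>2 + 2 * b\<^sup>2"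
proof -
  have "0 \<le> (a - b)\<^sup>2" by simp
  then show ?thesis unfolding power2_sum power2_diff by linarith
qed

lemma wait_local:
  assumes "\<And>j. j \<in> {1..<i} \<Longrightarrow> b j = b' j"
  shows "appt_wait id x b i = appt_wait id x b' i"
  using assms
proof (induction i)
  case 0 then show ?case by simp
next
  case (Suc i) then show ?case by auto
qed

lemma wait_meas_Pi:
  "{1..<i} \<subseteq> K \<Longrightarrow> (\<lambda>\<omega>. appt_wait id x \<omega> i) \<in> borel_measurable (PiM K (\<lambda>_. borel))"
proof (induction i)
  case 0 then show ?case by simp
next
  case (Suc i)
  have ih: "(\<lambda>\<omega>. appt_wait id x \<omega> i) \<in> borel_measurable (PiM K (\<lambda>_. borel))"
    by (rule Suc.IH) (use Suc.prems in auto)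
  show ?case
  proof (cases "i = 0")
    case True then show ?thesis by simp
  next
    case False
    then have "i \<in> K" using Suc.prems by auto
    then have c: "(\<lambda>\<omega>. \<omega> i) \<in> borel_measurable (PiM K (\<lambda>_. borel))" by simp
    have ih': "(\<lambda>\<omega>. appt_wait (\<lambda>a. a) x \<omega> i) \<in> borel_measurable (PiM K (\<lambda>_. borel))"
      using ih by (simp add: id_def)
    note [measurable] = ih' c
    show ?thesis using False unfolding id_def by simp
  qed
qed

lemma wait_meas:
  assumes "\<And>j. j \<in> {1..<i} \<Longrightarrow> B j \<in> borel_measurable M"
  shows "(\<lambda>y. appt_wait id x (\<lambda>j. B j y) i) \<in> borel_measurable M"
  using assms
proof (induction i)
  case 0 then show ?case by simp
next
  case (Suc i)
  have ih: "(\<lambda>y. appt_wait id x (\<lambda>j. B j y) i) \<in> borel_measurable M"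
    by (rule Suc.IH) (use Suc.prems in auto)
  show ?case
  proof (cases "i = 0")
    case True then show ?thesis by simp
  next
    case False
    then have c: "B i \<in> borel_measurable M" using Suc.prems by auto
    have ih': "(\<lambda>y. appt_wait (\<lambda>a. a) x (\<lambda>j. B j y) i) \<in> borel_measurable M"
      using ih by (simp add: id_def)
    note [measurable] = ih' c
    show ?thesis using False unfolding id_def by simp
  qed
qed

lemma abel_ineq:
  fixes q \<mu> :: "nat \<Rightarrow> real"
  assumes "\<And>i. 1 \<le> i \<Longrightarrow> i \<le> N \<Longrightarrow> 0 < \<mu> i"
    and "\<And>i. 1 \<le> i \<Longrightarrow> i < N \<Longrightarrow> \<mu> i \<le> \<mu> (Suc i)"
    and "\<And>i. 0 \<le> q i"
    and "1 \<le> N"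
  shows "(\<Sum>i=1..N. (q i - q (Suc i)) / \<mu> i) \<le> q 1 / \<mu> 1 - q (Suc N) / \<mu> N"
  using assms
proof (induction N)
  case 0 then show ?case by simp
next
  case (Suc N)
  show ?case
  proof (cases "N = 0")
    case True then show ?thesis by (simp add: diff_divide_distrib)
  next
    case False
    have ih: "(\<Sum>i=1..N. (q i - q (Suc i)) / \<mu> i) \<le> q 1 / \<mu> 1 - q (Suc N) / \<mu> N"
      using Suc False by auto
    have p1: "0 < \<mu> N" "0 < \<mu> (Suc N)" "\<mu> N \<le> \<mu> (Suc N)" using Suc.prems False by auto
    have "q (Suc N) / \<mu> (Suc N) \<le> q (Suc N) / \<mu> N"
      using p1 Suc.prems(3) by (simp add: frac_le)
    then show ?thesis using ih by (simp add: diff_divide_distrib)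
  qed
qed



theorem propositionC1:
  fixes M :: "'a measure" and n :: nat and \<omega> :: real
    and B :: "nat \<Rightarrow> 'a \<Rightarrow> real" and m s :: "nat \<Rightarrow> real"
  assumes "prob_space M"
    and "n \<ge> 2"
    and "0 < \<omega>" and "\<omega> < 1"
    and "prob_space.indep_vars M (\<lambda>_. borel) B {1..n}"
    and "\<And>i. i \<in> {1..n} \<Longrightarrow> lognormal_rv M (B i) (m i) (s i)"
    and "\<And>i j. 1 \<le> i \<Longrightarrow> i \<le> j \<Longrightarrow> j \<le> n \<Longrightarrow> m i \<le> m j"
    and "\<And>i j. 1 \<le> i \<Longrightarrow> i \<le> j \<Longrightarrow> j \<le> n \<Longrightarrow> (s i)\<^sup>2 \<le> (s j)\<^sup>2"
  shows "let \<alpha> = 1 / sqrt (2 * \<omega>) * sqrt (exp ((s (n - 1))\<^sup>2) - 1);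
             \<mu> = (\<lambda>i. integral\<^sup>L M (B i))
         in appt_cost M n B id (\<lambda>i. (1 + \<alpha>) * \<mu> i) \<omega>
            \<le> 2 * \<omega> * \<alpha> * (\<Sum>i=1..n-1. exp (m i + (s i)\<^sup>2 / 2))"
proof -
  interpret P: prob_space M by fact
  define \<alpha> where "\<alpha> = 1 / sqrt (2 * \<omega>) * sqrt (exp ((s (n - 1))\<^sup>2) - 1)"
  define \<mu> where "\<mu> = (\<lambda>i. integral\<^sup>L M (B i))"
  define x where "x = (\<lambda>i. (1 + \<alpha>) * \<mu> i)"
  define W where "W = (\<lambda>i y. appt_wait id x (\<lambda>j. B j y) i)"
  define I where "I = (\<lambda>i y. appt_idle id x (\<lambda>j. B j y) i)"
  define w where "w = (\<lambda>i. integral\<^sup>L M (W i))"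
  define q where "q = (\<lambda>i. integral\<^sup>L M (\<lambda>y. (W i y)\<^sup>2))"
  obtain N where nN: "n = Suc N" and N1: "1 \<le> N" using assms(2)
    by (cases n) auto
  have LN: "lognormal_rv M (B i) (m i) (s i)" if "1 \<le> i" "i \<le> n" for i
    using assms(6) that by auto
  have Bm: "B i \<in> borel_measurable M" and Bpos: "\<And>y. y \<in> space M \<Longrightarrow> 0 < B i y"
    and spos: "0 < s i"
    if "1 \<le> i" "i \<le> n" for i
    using LN[OF that] unfolding lognormal_rv_def by blast+
  have Bint: "integrable M (B i)" and B2int: "integrable M (\<lambda>y. (B i y)\<^sup>2)"
    and \<mu>eq: "\<mu> i = exp (m i + (s i)\<^sup>2 / 2)"
    and EB2: "integral\<^sup>L M (\<lambda>y. (B i y)\<^sup>2) = exp (2 * m i + 2 * (s i)\<^sup>2)"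
    if "1 \<le> i" "i \<le> n" for i
  proof -
    have e1: "exp (1 * ln (B i y)) = B i y" and e2: "exp (2 * ln (B i y)) = (B i y)\<^sup>2"
      if "y \<in> space M" for y
      using Bpos[OF \<open>1 \<le> i\<close> \<open>i \<le> n\<close> that] by (simp_all only: exp_ln_1 exp_ln_2)
    note mom = lognormal_moment[OF assms(1) LN[OF that]]
    have c1: "integrable M (\<lambda>y. exp (1 * ln (B i y))) = integrable M (B i)"
      by (rule Bochner_Integration.integrable_cong) (simp_all add: e1 Bpos[OF that])
    have c2: "integrable M (\<lambda>y. exp (2 * ln (B i y))) = integrable M (\<lambda>y. (B i y)\<^sup>2)"
      by (rule Bochner_Integration.integrable_cong) (simp_all add: e2 Bpos[OF that])
    show "integrable M (B i)" using mom(1)[of 1] c1 by simp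
    show "integrable M (\<lambda>y. (B i y)\<^sup>2)" using mom(1)[of 2] c2 by simp
    have "integral\<^sup>L M (\<lambda>y. exp (1 * ln (B i y))) = \<mu> i"
      unfolding \<mu>_def by (rule Bochner_Integration.integral_cong) (simp_all add: e1 Bpos[OF that])
    then show "\<mu> i = exp (m i + (s i)\<^sup>2 / 2)" using mom(2)[of 1] by simp
    have "integral\<^sup>L M (\<lambda>y. exp (2 * ln (B i y))) = integral\<^sup>L M (\<lambda>y. (B i y)\<^sup>2)"
      by (rule Bochner_Integration.integral_cong) (simp_all add: e2 Bpos[OF that])
    then show "integral\<^sup>L M (\<lambda>y. (B i y)\<^sup>2) = exp (2 * m i + 2 * (s i)\<^sup>2)"
      using mom(2)[of 2] by (simp add: power2_eq_square)
  qed
  have \<mu>pos: "0 < \<mu> i" if "1 \<le> i" "i \<le> n" for i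
    using \<mu>eq[OF that] by simp
  have \<mu>mono: "\<mu> i \<le> \<mu> j" if "1 \<le> i" "i \<le> j" "j \<le> n" for i j
  proof -
    have "m i \<le> m j" "(s i)\<^sup>2 \<le> (s j)\<^sup>2" using assms(7)[OF that] assms(8)[OF that] by auto
    then show ?thesis using \<mu>eq[of i] \<mu>eq[of j] that by simp
  qed
  have sn1: "0 < s (n - 1)" using spos[of "n - 1"] nN N1 by simp
  have sqa: "2 * \<omega> * \<alpha>\<^sup>2 = exp ((s (n - 1))\<^sup>2) - 1"
  proof -
    have "1 \<le> exp ((s (n - 1))\<^sup>2)" by simp
    then show ?thesis unfolding \<alpha>_def using assms(3)
      by (simp add: power_mult_distrib real_sqrt_pow2 power_divide)
  qed
  have apos: "0 < \<alpha>"
  proof -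
    have "1 < exp ((s (n - 1))\<^sup>2)" using sn1 by simp
    then show ?thesis unfolding \<alpha>_def using assms(3) by simp
  qed
  have varb: "integral\<^sup>L M (\<lambda>y. (B i y)\<^sup>2) - (\<mu> i)\<^sup>2 \<le> 2 * \<omega> * \<alpha>\<^sup>2 * (\<mu> i)\<^sup>2"
    if "1 \<le> i" "i \<le> N" for i
  proof -
    have i: "1 \<le> i" "i \<le> n" using that nN by auto
    have "(s i)\<^sup>2 \<le> (s (n - 1))\<^sup>2" using assms(8)[of i "n - 1"] that nN by simp
    then have "exp ((s i)\<^sup>2) - 1 \<le> 2 * \<omega> * \<alpha>\<^sup>2" unfolding sqa by simp
    then have "(\<mu> i)\<^sup>2 * (exp ((s i)\<^sup>2) - 1) \<le> (\<mu> i)\<^sup>2 * (2 * \<omega> * \<alpha>\<^sup>2)"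
      by (rule mult_left_mono) simp
    moreover have "integral\<^sup>L M (\<lambda>y. (B i y)\<^sup>2) - (\<mu> i)\<^sup>2 = (\<mu> i)\<^sup>2 * (exp ((s i)\<^sup>2) - 1)"
      unfolding EB2[OF i] \<mu>eq[OF i] by (simp add: algebra_simps power2_eq_square exp_add[symmetric])
    ultimately show ?thesis by (simp add: algebra_simps)
  qed
  have xnn: "0 \<le> x i" if "1 \<le> i" "i \<le> n" for i
    unfolding x_def using \<mu>pos[OF that] apos by simp
  have Wnn: "0 \<le> W i y" for i y
    unfolding W_def by (cases i) auto
  have W1: "W 1 y = 0" and W0: "W 0 y = 0" for y unfolding W_def by simp_all
  have Wsuc: "W (Suc i) y = max 0 (W i y + B i y - x i)" and Isuc: "I (Suc i) y = max 0 (- (W i y + B i y - x i))"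
    if "1 \<le> i" for i y
    using that unfolding W_def I_def by auto
  have Wm: "W i \<in> borel_measurable M" if "i \<le> n" for i
    unfolding W_def by (rule wait_meas) (use Bm that in auto)
  have Wint: "integrable M (W i) \<and> integrable M (\<lambda>y. (W i y)\<^sup>2)" if "i \<le> n" for i
    using that
  proof (induction i)
    case 0 then show ?case by (simp add: W0)
  next
    case (Suc i)
    show ?case
    proof (cases "i = 0")
      case True then show ?thesis using W1 by simp
    next
      case False
      then have i: "1 \<le> i" "i \<le> n" using Suc.prems by auto
      have ih: "integrable M (W i)" "integrable M (\<lambda>y. (W i y)\<^sup>2)" using Suc i by auto
      have bd: "W (Suc i) y \<le> W i y + B i y" if "y \<in> space M" for y
        using Wsuc[OF i(1)] Bpos[OF i that] Wnn[of i y] xnn[OF i] by simp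
      have m1: "W (Suc i) \<in> borel_measurable M" using Wm Suc.prems by blast
      have m2: "(\<lambda>y. (W (Suc i) y)\<^sup>2) \<in> borel_measurable M" using m1 by measurable
      show ?thesis
      proof
        show "integrable M (W (Suc i))"
        proof (rule Bochner_Integration.integrable_bound[OF _ m1])
          show "integrable M (\<lambda>y. W i y + B i y)" using ih Bint[OF i] by simp
          show "AE y in M. norm (W (Suc i) y) \<le> norm (W i y + B i y)"
            using bd Wnn Bpos[OF i] by (auto intro!: AE_I2 simp: less_imp_le)
        qed
        show "integrable M (\<lambda>y. (W (Suc i) y)\<^sup>2)"
        proof (rule Bochner_Integration.integrable_bound[OF _ m2])
          show "integrable M (\<lambda>y. 2 * (W i y)\<^sup>2 + 2 * (B i y)\<^sup>2)" using ih B2int[OF i] by simp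
          have "(W (Suc i) y)\<^sup>2 \<le> 2 * (W i y)\<^sup>2 + 2 * (B i y)\<^sup>2" if "y \<in> space M" for y
          proof -
            have a: "0 \<le> W (Suc i) y" "0 \<le> W i y" "0 < B i y" using Wnn Bpos[OF i that] by auto
            have "(W (Suc i) y)\<^sup>2 \<le> (W i y + B i y)\<^sup>2"
              using power_mono[OF bd[OF that] a(1), of 2] .
            also have "\<dots> \<le> 2 * (W i y)\<^sup>2 + 2 * (B i y)\<^sup>2"
              by (rule sq_sum_le)
            finally show ?thesis .
          qed
          then show "AE y in M. norm ((W (Suc i) y)\<^sup>2) \<le> norm (2 * (W i y)\<^sup>2 + 2 * (B i y)\<^sup>2)"
            by (intro AE_I2) simp
        qed
      qed
    qed
  qed
  have ind: "P.indep_vars (\<lambda>_. borel) B {1..n}" using assms(5) .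
  have WBint: "integrable M (\<lambda>y. W i y * B i y)" and WB: "integral\<^sup>L M (\<lambda>y. W i y * B i y) = w i * \<mu> i"
    if i: "1 \<le> i" "i \<le> N" for i
  proof -
    have iv: "P.indep_var (PiM {1..<i} (\<lambda>_. borel)) (\<lambda>y. restrict (\<lambda>j. B j y) {1..<i})
       (PiM {i} (\<lambda>_. borel)) (\<lambda>y. restrict (\<lambda>j. B j y) {i})"
      by (rule P.indep_var_restrict[OF ind]) (use i nN in auto)
    have "P.indep_var borel ((\<lambda>\<omega>. appt_wait id x \<omega> i) \<circ> (\<lambda>y. restrict (\<lambda>j. B j y) {1..<i}))
        borel ((\<lambda>\<omega>. \<omega> i) \<circ> (\<lambda>y. restrict (\<lambda>j. B j y) {i}))"
      by (rule P.indep_var_compose[OF iv]) (auto intro: wait_meas_Pi)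
    moreover have "((\<lambda>\<omega>. appt_wait id x \<omega> i) \<circ> (\<lambda>y. restrict (\<lambda>j. B j y) {1..<i})) = W i"
      unfolding W_def comp_def by (rule ext, rule wait_local) auto
    moreover have "((\<lambda>\<omega>. \<omega> i) \<circ> (\<lambda>y. restrict (\<lambda>j. B j y) {i})) = B i"
      by (rule ext) (simp add: comp_def)
    ultimately have ivWB: "P.indep_var borel (W i) borel (B i)" by simp
    have i': "1 \<le> i" "i \<le> n" "i \<le> n" using i nN by auto
    have wi: "integrable M (W i)" using Wint[OF i'(3)] by blast
    show "integrable M (\<lambda>y. W i y * B i y)"
      by (rule P.indep_var_integrable[OF ivWB wi Bint[OF i'(1,2)]])
    show "integral\<^sup>L M (\<lambda>y. W i y * B i y) = w i * \<mu> i"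
      unfolding w_def \<mu>_def by (rule P.indep_var_lebesgue_integral[OF ivWB wi Bint[OF i'(1,2)]])
  qed
  have qnn: "0 \<le> q i" for i unfolding q_def by (rule integral_nonneg_AE) simp
  have wnn: "0 \<le> w i" for i unfolding w_def by (rule integral_nonneg_AE) (simp add: Wnn)
  have step: "q (Suc i) \<le> q i + (integral\<^sup>L M (\<lambda>y. (B i y)\<^sup>2) - (\<mu> i)\<^sup>2) - 2 * \<alpha> * \<mu> i * w (Suc i)"
    and Iint: "integral\<^sup>L M (I (Suc i)) = w (Suc i) - w i + \<alpha> * \<mu> i"
    if i: "1 \<le> i" "i \<le> N" for i
  proof -
    have i': "1 \<le> i" "i \<le> n" "i \<le> n" "Suc i \<le> n" using i nN by auto
    define X where "X = (\<lambda>y. W i y + B i y - x i)"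
    have XW: "W (Suc i) y = max 0 (X y)" and XI: "I (Suc i) y = max 0 (- X y)" for y
      unfolding X_def using Wsuc[OF i(1)] Isuc[OF i(1)] by auto
    have sq: "(X y)\<^sup>2 = (W (Suc i) y)\<^sup>2 + (I (Suc i) y)\<^sup>2" for y
      unfolding XW XI by (simp add: max_def power2_eq_square)
    have Ieq: "I (Suc i) y = W (Suc i) y - X y" for y
      unfolding XW XI by (simp add: max_def)
    have wi: "integrable M (W i)" "integrable M (\<lambda>y. (W i y)\<^sup>2)" using Wint[OF i'(3)] by auto
    have ws: "integrable M (W (Suc i))" "integrable M (\<lambda>y. (W (Suc i) y)\<^sup>2)" using Wint[OF i'(4)] by auto
    note bi = Bint[OF i'(1,2)] B2int[OF i'(1,2)]
    note wb = WBint[OF i] WB[OF i]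
    have Xexp: "(X y)\<^sup>2 = (W i y)\<^sup>2 + 2 * (W i y * B i y) - 2 * x i * W i y + (B i y)\<^sup>2 - 2 * x i * B i y + (x i)\<^sup>2" for y
      unfolding X_def by (simp add: power2_eq_square algebra_simps)
    have X2int: "integrable M (\<lambda>y. (X y)\<^sup>2)"
      unfolding Xexp using wi bi wb by simp
    have X2: "integral\<^sup>L M (\<lambda>y. (X y)\<^sup>2) = q i + 2 * (w i * \<mu> i) - 2 * x i * w i + integral\<^sup>L M (\<lambda>y. (B i y)\<^sup>2) - 2 * x i * \<mu> i + (x i)\<^sup>2"
      unfolding Xexp using wi bi wb by (simp add: q_def w_def \<mu>_def P.prob_space)
    have Xint: "integrable M X" unfolding X_def using wi bi by simp
    have X1: "integral\<^sup>L M X = w i + \<mu> i - x i" unfolding X_def using wi bi by (simp add: w_def \<mu>_def P.prob_space)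
    have I2eq: "(\<lambda>y. (I (Suc i) y)\<^sup>2) = (\<lambda>y. (X y)\<^sup>2 - (W (Suc i) y)\<^sup>2)" using sq by (auto simp: fun_eq_iff)
    have I2int: "integrable M (\<lambda>y. (I (Suc i) y)\<^sup>2)" unfolding I2eq using X2int ws by simp
    have I2: "integral\<^sup>L M (\<lambda>y. (I (Suc i) y)\<^sup>2) = integral\<^sup>L M (\<lambda>y. (X y)\<^sup>2) - q (Suc i)"
      unfolding I2eq q_def using X2int ws by simp
    have I1eq: "I (Suc i) = (\<lambda>y. W (Suc i) y - X y)" using Ieq by (auto simp: fun_eq_iff)
    have I1int: "integrable M (I (Suc i))" unfolding I1eq using Xint ws by simp
    have I1: "integral\<^sup>L M (I (Suc i)) = w (Suc i) - (w i + \<mu> i - x i)"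
      unfolding I1eq using Xint ws X1 by (simp add: w_def)
    have jen: "(integral\<^sup>L M (I (Suc i)))\<^sup>2 \<le> integral\<^sup>L M (\<lambda>y. (I (Suc i) y)\<^sup>2)"
      using P.variance_eq[OF I1int I2int] P.variance_positive[of "I (Suc i)"] by simp
    have xi: "x i = \<mu> i + \<alpha> * \<mu> i" unfolding x_def by (simp add: algebra_simps)
    show "integral\<^sup>L M (I (Suc i)) = w (Suc i) - w i + \<alpha> * \<mu> i" using I1 xi by simp
    define a where "a = \<alpha> * \<mu> i"
    define E2 where "E2 = integral\<^sup>L M (\<lambda>y. (B i y)\<^sup>2)"
    have e1: "q (Suc i) = q i - 2 * a * w i + E2 - (\<mu> i)\<^sup>2 + a\<^sup>2 - integral\<^sup>L M (\<lambda>y. (I (Suc i) y)\<^sup>2)"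
      unfolding I2 X2 xi a_def E2_def by (simp add: power2_eq_square algebra_simps)
    have e2: "(integral\<^sup>L M (I (Suc i)))\<^sup>2 = (w (Suc i) - w i)\<^sup>2 + 2 * a * w (Suc i) - 2 * a * w i + a\<^sup>2"
      unfolding I1 xi a_def by (simp add: power2_eq_square algebra_simps)
    have "0 \<le> (w (Suc i) - w i)\<^sup>2" by simp
    then show "q (Suc i) \<le> q i + (integral\<^sup>L M (\<lambda>y. (B i y)\<^sup>2) - (\<mu> i)\<^sup>2) - 2 * \<alpha> * \<mu> i * w (Suc i)"
    proof -
      have "q (Suc i) \<le> q i + (E2 - (\<mu> i)\<^sup>2) - 2 * a * w (Suc i)"
        using e1 e2 jen \<open>0 \<le> (w (Suc i) - w i)\<^sup>2\<close> by linarith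
      then show ?thesis unfolding a_def E2_def by (simp add: mult.assoc)
    qed
  qed
  have wb: "w (Suc i) \<le> ((q i - q (Suc i)) / \<mu> i) / (2 * \<alpha>) + \<omega> * \<alpha> * \<mu> i"
    if i: "1 \<le> i" "i \<le> N" for i
  proof -
    have i': "1 \<le> i" "i \<le> n" using i nN by auto
    have mp: "0 < \<mu> i" using \<mu>pos[OF i'] .
    have "2 * \<alpha> * \<mu> i * w (Suc i) \<le> q i - q (Suc i) + 2 * \<omega> * \<alpha>\<^sup>2 * (\<mu> i)\<^sup>2"
      using step[OF i] varb[OF i] by linarith
    then have "w (Suc i) * (2 * \<alpha> * \<mu> i) \<le> (q i - q (Suc i)) + (\<omega> * \<alpha> * \<mu> i) * (2 * \<alpha> * \<mu> i)"
      by (simp add: power2_eq_square algebra_simps)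
    then show ?thesis using mp apos
      by (simp add: field_simps)
  qed
  have sumW: "(\<Sum>i=1..N. w (Suc i)) \<le> \<omega> * \<alpha> * (\<Sum>i=1..N. \<mu> i)"
  proof -
    have "(\<Sum>i=1..N. w (Suc i)) \<le> (\<Sum>i=1..N. ((q i - q (Suc i)) / \<mu> i) / (2 * \<alpha>) + \<omega> * \<alpha> * \<mu> i)"
      by (rule sum_mono) (use wb in auto)
    also have "\<dots> = (\<Sum>i=1..N. (q i - q (Suc i)) / \<mu> i) / (2 * \<alpha>) + \<omega> * \<alpha> * (\<Sum>i=1..N. \<mu> i)"
      by (simp add: sum.distrib sum_divide_distrib sum_distrib_left)
    also have "\<dots> \<le> \<omega> * \<alpha> * (\<Sum>i=1..N. \<mu> i)"
    proof -
      have ab: "(\<Sum>i=1..N. (q i - q (Suc i)) / \<mu> i) \<le> q 1 / \<mu> 1 - q (Suc N) / \<mu> N"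
        by (rule abel_ineq) (use \<mu>pos \<mu>mono qnn N1 nN in auto)
      have "q 1 = 0" unfolding q_def W_def by simp
      moreover have "0 \<le> q (Suc N) / \<mu> N" using qnn \<mu>pos[of N] N1 nN by simp
      ultimately have "(\<Sum>i=1..N. (q i - q (Suc i)) / \<mu> i) \<le> 0" using ab by simp
      then show ?thesis using apos by (simp add: divide_nonpos_pos)
    qed
    finally show ?thesis .
  qed
  have I1z: "integral\<^sup>L M (I 1) = 0" unfolding I_def by simp
  have w1: "w 1 = 0" unfolding w_def W_def by simp
  have split: "(\<Sum>i=1..n. f i) = f 1 + (\<Sum>i=1..N. f (Suc i))" for f :: "nat \<Rightarrow> real"
  proof -
    have "(\<Sum>i=1..n. f i) = (\<Sum>i=0..N. f (Suc i))"
      unfolding nN using sum.shift_bounds_cl_Suc_ivl[of f 0 N] by simp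
    also have "\<dots> = f (Suc 0) + (\<Sum>i=Suc 0..N. f (Suc i))"
      by (rule sum.atLeast_Suc_atMost) simp
    finally show ?thesis by simp
  qed
  have sumI: "(\<Sum>i=1..n. integral\<^sup>L M (I i)) = w (Suc N) + \<alpha> * (\<Sum>i=1..N. \<mu> i)"
  proof -
    have "(\<Sum>i=1..n. integral\<^sup>L M (I i)) = (\<Sum>i=1..N. w (Suc i) - w i + \<alpha> * \<mu> i)"
      unfolding split I1z by (simp add: Iint)
    also have "\<dots> = (\<Sum>i=1..N. w (Suc i) - w i) + \<alpha> * (\<Sum>i=1..N. \<mu> i)"
      by (simp add: sum.distrib sum_distrib_left)
    also have "(\<Sum>i=1..N. w (Suc i) - w i) = w (Suc N)"
      using sum_Suc_diff[of 1 N w] N1 w1 by simp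
    finally show ?thesis .
  qed
  have sumWall: "(\<Sum>i=1..n. integral\<^sup>L M (W i)) = (\<Sum>i=1..N. w (Suc i))"
    unfolding split using w1 by (simp add: w_def)
  have wN: "w (Suc N) \<le> (\<Sum>i=1..N. w (Suc i))"
    using member_le_sum[of N "{1..N}" "\<lambda>i. w (Suc i)"] wnn N1 by auto
  have sm: "(\<Sum>i=1..N. \<mu> i) = (\<Sum>i=1..n-1. exp (m i + (s i)\<^sup>2 / 2))"
    using nN by (auto intro!: sum.cong simp: \<mu>eq)
  have cost: "appt_cost M n B id x \<omega> = \<omega> * (w (Suc N) + \<alpha> * (\<Sum>i=1..N. \<mu> i)) + (1 - \<omega>) * (\<Sum>i=1..N. w (Suc i))"
    unfolding appt_cost_def sumI[unfolded I_def, symmetric] sumWall[unfolded W_def, symmetric] ..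
  have "\<omega> * w (Suc N) \<le> \<omega> * (\<Sum>i=1..N. w (Suc i))" using wN assms(3) by simp
  moreover have "(1 - \<omega>) * (\<Sum>i=1..N. w (Suc i)) + \<omega> * (\<Sum>i=1..N. w (Suc i)) = (\<Sum>i=1..N. w (Suc i))"
    by (simp add: algebra_simps)
  ultimately have final: "appt_cost M n B id x \<omega> \<le> 2 * \<omega> * \<alpha> * (\<Sum>i=1..n-1. exp (m i + (s i)\<^sup>2 / 2))"
    unfolding cost sm[symmetric] using sumW by (simp add: algebra_simps)
  show ?thesis using final unfolding Let_def \<alpha>_def \<mu>_def x_def .
qed
end
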